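(* Let $(a_{n,k})_{n,k\ge1}$ be complex numbers such that each power series $1+\sum_{k=1}^{\infty}a_{n,k}\lambda^k$ is analytic (near $\lambda=0$) and the partial products $\prod_{n=1}^{N}\big(1+\sum_{k=1}^{\infty}a_{n,k}\lambda^k\big)$ converge uniformly as $N\to\infty$ to $\prod_{n=1}^{\infty}\big(1+\sum_{k=1}^{\infty}a_{n,k}\lambda^k\big)=1+\sum_{k=1}^{\infty}X_k\lambda^k$ (no convergence is assumed for series of the form $\sum_n\prod_j a_{n,k_j}$). For $N\in\mathbb{N}$ let $\epsilon^{(N)}_{n,k}:=1$ if $n<N$ and $\epsilon^{(N)}_{n,k}:=0$ otherwise. Then for every $k\in\mathbb{N}$, $$X_k=\lim_{N\to\infty}\sum_{L\vdash k}\frac{1}{C_{stb}(L)}\sum_{\sigma\in S_{\ell(L)}}\operatorname{sign}(\sigma)\,\mathbb{A}_{\sigma,L}\big(\{a_{n,k}\epsilon^{(N)}_{n,k}\}_{n,k\ge1}\big).$$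
   Context: $L\vdash k$ means $L=[x_1,\dots,x_m]$ is a partition of $k$ (multiset of positive integers summing to $k$), $\ell(L)=m$, and $C_{stb}(L):=\prod_x(\#\{i:x_i=x\})!$ over distinct values $x$ in $L$. For a family $b=(b_{n,j})_{n,j\ge1}$ with only finitely many nonzero rows, writing $L=[k_1,\dots,k_m]$ with $k_1\le\cdots\le k_m$ and decomposing $\sigma\in S_m$ into disjoint cycles $C_1,\dots,C_r$ (fixed points kept as length-one cycles), $\mathbb{A}_{\sigma,L}(b):=\prod_{t=1}^{r}\big(\sum_{n=1}^{\infty}\prod_{i\in C_t}b_{n,k_i}\big)$; $\operatorname{sign}(\sigma)$ is the sign of $\sigma$. *)

theory Defs
  imports "HOL-Analysis.Analysis" "HOL-Library.Multiset" "HOL-Combinatorics.Orbits"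
          "HOL-Combinatorics.Permutations"
begin

definition partitions :: "nat \<Rightarrow> nat multiset set" where
  "partitions k = {L. (\<forall>x\<in>#L. 0 < x) \<and> sum_mset L = k}"

definition C_stb :: "nat multiset \<Rightarrow> nat" where
  "C_stb L = (\<Prod>x\<in>set_mset L. fact (count L x))"

definition perm_cycles :: "(nat \<Rightarrow> nat) \<Rightarrow> nat \<Rightarrow> nat set set" where
  "perm_cycles \<sigma> m = (\<lambda>i. orbit \<sigma> i) ` {0..<m}"

text \<open>A_{sigma,L}(b): L sorted increasingly as k_0 \<le> ... \<le> k_{m-1} (0-based indices),
  product over cycles C of sum over n \<ge> 1 of prod over i in C of b n k_i.\<close>
definition A_op :: "(nat \<Rightarrow> nat) \<Rightarrow> nat multiset \<Rightarrow> (nat \<Rightarrow> nat \<Rightarrow> complex) \<Rightarrow> complex" where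
  "A_op \<sigma> L b = (let ks = sorted_list_of_multiset L in
     \<Prod>C\<in>perm_cycles \<sigma> (size L). (\<Sum>n. \<Prod>i\<in>C. b (Suc n) (ks ! i)))"

end

theory Submission imports Defs "HOL-Combinatorics.Multiset_Permutations" "HOL-Complex_Analysis.Complex_Analysis"
begin

lemma sign_stab_sum:
  fixes f :: "nat \<Rightarrow> nat" and m :: nat
  shows "(\<Sum>\<sigma>\<in>{p. p permutes {0..<m} \<and> (\<forall>i<m. f (p i) = f i)}. (of_int (sign \<sigma>)::complex))
         = (if inj_on f {0..<m} then 1 else 0)"
proof (cases "inj_on f {0..<m}")
  case True
  have "{p. p permutes {0..<m} \<and> (\<forall>i<m. f (p i) = f i)} = {id}"
  proof (intro set_eqI iffI)
    fix p assume "p \<in> {p. p permutes {0..<m} \<and> (\<forall>i<m. f (p i) = f i)}"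
    hence p: "p permutes {0..<m}" "\<forall>i<m. f (p i) = f i" by auto
    have "p x = x" for x
    proof (cases "x < m")
      case True
      have "p x \<in> {0..<m}" using permutes_in_image[OF p(1)] True by auto
      then show ?thesis using inj_onD[OF \<open>inj_on f {0..<m}\<close> p(2)[rule_format, OF True]] True by auto
    next
      case False thus ?thesis using permutes_not_in[OF p(1)] by auto
    qed
    thus "p \<in> {id}" by auto
  qed (auto simp: permutes_id)
  thus ?thesis using True by simp
next
  case False
  then obtain i j where ij: "i < m" "j < m" "i \<noteq> j" "f i = f j"
    unfolding inj_on_def by auto
  define G where "G = {p. p permutes {0..<m} \<and> (\<forall>i<m. f (p i) = f i)}"
  define \<tau> where "\<tau> = Transposition.transpose i j"
  have tau: "\<tau> permutes {0..<m}" using ij by (auto simp: \<tau>_def intro!: permutes_swap_id)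
  have ftau: "f (\<tau> x) = f x" for x using ij by (auto simp: \<tau>_def Transposition.transpose_def)
  have fin: "finite G" unfolding G_def
    by (rule finite_subset[OF _ finite_permutations[of "{0..<m}"]]) auto
  have "(\<Sum>\<sigma>\<in>G. (of_int (sign \<sigma>)::complex)) = (\<Sum>\<sigma>\<in>G. of_int (sign (\<tau> \<circ> \<sigma>)))"
    by (rule sum.reindex_bij_witness[where i="\<lambda>\<sigma>. \<tau> \<circ> \<sigma>" and j="\<lambda>\<sigma>. \<tau> \<circ> \<sigma>"])
       (auto simp: G_def \<tau>_def comp_assoc[symmetric] ftau[unfolded \<tau>_def] intro!: permutes_compose permutes_swap_id ij)
  also have "\<dots> = (\<Sum>\<sigma>\<in>G. - of_int (sign \<sigma>))"
  proof (rule sum.cong)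
    fix \<sigma> assume "\<sigma> \<in> G"
    hence "permutation \<sigma>" by (auto simp: G_def permutation_permutes)
    moreover have "permutation \<tau>" using tau by (auto simp: permutation_permutes)
    ultimately show "(of_int (sign (\<tau> \<circ> \<sigma>))::complex) = - of_int (sign \<sigma>)"
      by (simp add: sign_compose \<tau>_def sign_swap_id ij)
  qed simp
  also have "\<dots> = - (\<Sum>\<sigma>\<in>G. of_int (sign \<sigma>))" by (simp add: sum_negf)
  finally have "(\<Sum>\<sigma>\<in>G. (of_int (sign \<sigma>)::complex)) = 0" by simp
  thus ?thesis using False by (simp add: G_def)
qed

lemma orbit_facts:
  fixes \<sigma> :: "nat \<Rightarrow> nat"
  assumes p: "\<sigma> permutes {0..<m}" and i: "i < m"
  shows "i \<in> orbit \<sigma> i" "orbit \<sigma> i \<subseteq> {0..<m}" "finite (orbit \<sigma> i)"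
    "\<And>j. j \<in> orbit \<sigma> i \<Longrightarrow> orbit \<sigma> j = orbit \<sigma> i"
proof -
  have perm: "permutation \<sigma>" using p by (auto simp: permutation_permutes intro!: exI[of _ "{0..<m}"])
  show "i \<in> orbit \<sigma> i" by (rule permutation_self_in_orbit[OF perm])
  show sub: "orbit \<sigma> i \<subseteq> {0..<m}" using permutes_orbit_subset[OF p] i by auto
  show "finite (orbit \<sigma> i)" using finite_subset[OF sub] by auto
  fix j assume "j \<in> orbit \<sigma> i"
  thus "orbit \<sigma> j = orbit \<sigma> i"
    using cyclic_on_orbit'[OF perm, of i] orbit_cyclic_eq3 by metis
qed

lemma const_on_orbit:
  fixes \<sigma> :: "nat \<Rightarrow> nat"
  assumes p: "\<sigma> permutes {0..<m}" and i: "i < m" and f: "\<forall>i<m. f (\<sigma> i) = f i"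
    and j: "j \<in> orbit \<sigma> i"
  shows "f j = f i"
  using j
proof induction
  case base thus ?case using f i by auto
next
  case (step y)
  have "y < m" using orbit_facts(2)[OF p i] step(1) by auto
  thus ?case using f step by auto
qed

lemma cycle_expand:
  fixes c :: "nat \<Rightarrow> nat \<Rightarrow> complex"
  assumes p: "\<sigma> permutes {0..<m}" and S: "finite S"
  shows "(\<Prod>C\<in>perm_cycles \<sigma> m. \<Sum>n\<in>S. \<Prod>i\<in>C. c n i)
       = (\<Sum>f\<in>{f\<in>{0..<m} \<rightarrow>\<^sub>E S. \<forall>i<m. f (\<sigma> i) = f i}. \<Prod>i\<in>{0..<m}. c (f i) i)"
proof -
  define P where "P = perm_cycles \<sigma> m"
  have P: "P = orbit \<sigma> ` {0..<m}" by (simp add: P_def perm_cycles_def)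
  have finP: "finite P" by (simp add: P)
  have CP: "C \<in> P \<Longrightarrow> Min C \<in> C \<and> Min C < m \<and> orbit \<sigma> (Min C) = C" for C
  proof -
    assume "C \<in> P"
    then obtain i where i: "i < m" "C = orbit \<sigma> i" by (auto simp: P)
    have ne: "C \<noteq> {}" using orbit_facts(1)[OF p i(1)] i by auto
    have "Min C \<in> C" using Min_in[OF _ ne] orbit_facts(3)[OF p i(1)] i by auto
    thus ?thesis using orbit_facts(2,4)[OF p i(1)] i by auto
  qed
  have "(\<Prod>C\<in>P. \<Sum>n\<in>S. \<Prod>i\<in>C. c n i) = (\<Sum>g\<in>P \<rightarrow>\<^sub>E S. \<Prod>C\<in>P. \<Prod>i\<in>C. c (g C) i)"
    by (rule prod_sum_PiE[OF finP S])
  also have "\<dots> = (\<Sum>g\<in>P \<rightarrow>\<^sub>E S. \<Prod>i\<in>{0..<m}. c (g (orbit \<sigma> i)) i)"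
  proof (rule sum.cong[OF refl])
    fix g
    have "(\<Prod>i\<in>{0..<m}. c (g (orbit \<sigma> i)) i)
        = (\<Prod>C\<in>orbit \<sigma> ` {0..<m}. \<Prod>i\<in>{x\<in>{0..<m}. orbit \<sigma> x = C}. c (g (orbit \<sigma> i)) i)"
      by (rule prod.image_gen) simp
    also have "\<dots> = (\<Prod>C\<in>P. \<Prod>i\<in>C. c (g C) i)"
    proof (rule prod.cong)
      fix C assume "C \<in> P"
      then obtain j where j: "j < m" "C = orbit \<sigma> j" by (auto simp: P)
      have oc: "orbit \<sigma> x = C \<and> x < m" if x: "x \<in> C" for x
      proof -
        have x': "x \<in> orbit \<sigma> j" using j x by simp
        have "orbit \<sigma> x = orbit \<sigma> j" by (rule orbit_facts(4)[OF p j(1) x'])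
        moreover have "x < m" using orbit_facts(2)[OF p j(1)] x' by auto
        ultimately show ?thesis using j by simp
      qed
      have se: "{x\<in>{0..<m}. orbit \<sigma> x = C} = C"
      proof (intro set_eqI iffI)
        fix x assume "x \<in> {x\<in>{0..<m}. orbit \<sigma> x = C}"
        hence "x < m" "orbit \<sigma> x = C" by auto
        thus "x \<in> C" using orbit_facts(1)[OF p, of x] by blast
      next
        fix x assume "x \<in> C"
        thus "x \<in> {x\<in>{0..<m}. orbit \<sigma> x = C}" using oc[of x] by simp
      qed
      show "(\<Prod>i\<in>{x\<in>{0..<m}. orbit \<sigma> x = C}. c (g (orbit \<sigma> i)) i) = (\<Prod>i\<in>C. c (g C) i)"
        unfolding se by (rule prod.cong[OF refl]) (simp add: oc)
    qed (simp add: P)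
    finally show "(\<Prod>C\<in>P. \<Prod>i\<in>C. c (g C) i) = (\<Prod>i\<in>{0..<m}. c (g (orbit \<sigma> i)) i)" by simp
  qed
  also have "\<dots> = (\<Sum>f\<in>{f\<in>{0..<m} \<rightarrow>\<^sub>E S. \<forall>i<m. f (\<sigma> i) = f i}. \<Prod>i\<in>{0..<m}. c (f i) i)"
  proof (rule sum.reindex_bij_witness[where j="\<lambda>g i. if i \<in> {0..<m} then g (orbit \<sigma> i) else undefined"
        and i="\<lambda>f C. if C \<in> P then f (Min C) else undefined"])
    fix g assume g: "g \<in> P \<rightarrow>\<^sub>E S"
    show "(\<lambda>C. if C \<in> P then (if Min C \<in> {0..<m} then g (orbit \<sigma> (Min C)) else undefined) else undefined) = g"
      using g CP by (auto simp: fun_eq_iff PiE_def extensional_def)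
    show "(\<lambda>i. if i \<in> {0..<m} then g (orbit \<sigma> i) else undefined) \<in> {f\<in>{0..<m} \<rightarrow>\<^sub>E S. \<forall>i<m. f (\<sigma> i) = f i}"
    proof -
      have "i < m \<Longrightarrow> \<sigma> i < m" for i using permutes_in_image[OF p] by auto
      moreover have "orbit \<sigma> (\<sigma> i) = orbit \<sigma> i" for i
        using p by (auto simp: permutation_permutes intro!: permutation_orbit_step exI[of _ "{0..<m}"])
      ultimately show ?thesis using g by (auto simp: P)
    qed
    show "(\<Prod>i\<in>{0..<m}. c ((if i \<in> {0..<m} then g (orbit \<sigma> i) else undefined)) i)
        = (\<Prod>i\<in>{0..<m}. c (g (orbit \<sigma> i)) i)" by (rule prod.cong) auto
  next
    fix f assume f: "f \<in> {f\<in>{0..<m} \<rightarrow>\<^sub>E S. \<forall>i<m. f (\<sigma> i) = f i}"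
    show "(\<lambda>i. if i \<in> {0..<m} then (if orbit \<sigma> i \<in> P then f (Min (orbit \<sigma> i)) else undefined) else undefined) = f"
    proof
      fix i show "(if i \<in> {0..<m} then (if orbit \<sigma> i \<in> P then f (Min (orbit \<sigma> i)) else undefined) else undefined) = f i"
      proof (cases "i < m")
        case True
        have "orbit \<sigma> i \<in> P" using True by (auto simp: P)
        hence "Min (orbit \<sigma> i) \<in> orbit \<sigma> i" using CP by blast
        hence "f (Min (orbit \<sigma> i)) = f i" using const_on_orbit[OF p True] f by blast
        thus ?thesis using True \<open>orbit \<sigma> i \<in> P\<close> by auto
      qed (use f in auto)
    qed
    show "(\<lambda>C. if C \<in> P then f (Min C) else undefined) \<in> P \<rightarrow>\<^sub>E S"
      using f CP by auto
  qed
  finally show ?thesis by (simp add: P_def)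
qed

definition Dl :: "nat set \<Rightarrow> nat \<Rightarrow> nat list set" where
  "Dl S m = {ns. distinct ns \<and> set ns \<subseteq> S \<and> length ns = m}"

lemma finite_Dl: "finite S \<Longrightarrow> finite (Dl S m)"
  unfolding Dl_def by (rule finite_subset[OF _ finite_subset_distinct[of S]]) auto

lemma sign_sum_inj:
  fixes c :: "nat \<Rightarrow> nat \<Rightarrow> complex"
  assumes S: "finite S"
  shows "(\<Sum>\<sigma>\<in>{p. p permutes {0..<m}}. of_int (sign \<sigma>) * (\<Prod>C\<in>perm_cycles \<sigma> m. \<Sum>n\<in>S. \<Prod>i\<in>C. c n i))
       = (\<Sum>ns\<in>Dl S m. \<Prod>i\<in>{0..<m}. c (ns!i) i)"
proof -
  define E where "E = {0..<m} \<rightarrow>\<^sub>E S"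
  define W where "W = (\<lambda>f. \<Prod>i\<in>{0..<m}. c (f i) i)"
  have finE: "finite E" using S by (simp add: E_def finite_PiE)
  have finP: "finite {p. p permutes {0..<m}}" by (rule finite_permutations) simp
  have "(\<Sum>\<sigma>\<in>{p. p permutes {0..<m}}. of_int (sign \<sigma>) * (\<Prod>C\<in>perm_cycles \<sigma> m. \<Sum>n\<in>S. \<Prod>i\<in>C. c n i))
      = (\<Sum>\<sigma>\<in>{p. p permutes {0..<m}}. \<Sum>f\<in>{f. f \<in> E \<and> (\<forall>i<m. f (\<sigma> i) = f i)}. of_int (sign \<sigma>) * W f)"
    by (rule sum.cong[OF refl]) (simp add: cycle_expand[OF _ S] sum_distrib_left E_def W_def)
  also have "\<dots> = (\<Sum>f\<in>E. \<Sum>\<sigma>\<in>{\<sigma>. \<sigma> \<in> {p. p permutes {0..<m}} \<and> (\<forall>i<m. f (\<sigma> i) = f i)}. of_int (sign \<sigma>) * W f)"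
    by (rule sum.swap_restrict[OF finP finE])
  also have "\<dots> = (\<Sum>f\<in>E. (if inj_on f {0..<m} then 1 else 0) * W f)"
    by (rule sum.cong[OF refl]) (simp add: sum_distrib_right[symmetric] sign_stab_sum del: of_int_sum)
  also have "\<dots> = (\<Sum>f\<in>{f\<in>E. inj_on f {0..<m}}. W f)"
    using finE by (simp add: sum.inter_filter) (rule sum.cong, auto)
  also have "\<dots> = (\<Sum>ns\<in>Dl S m. \<Prod>i\<in>{0..<m}. c (ns!i) i)"
  proof (rule sum.reindex_bij_witness[where j="\<lambda>f. map f [0..<m]"
        and i="\<lambda>ns x. if x \<in> {0..<m} then ns!x else undefined"])
    fix f assume f: "f \<in> {f\<in>E. inj_on f {0..<m}}"
    show "(\<lambda>x. if x \<in> {0..<m} then map f [0..<m] ! x else undefined) = f"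
      using f by (auto simp: E_def fun_eq_iff PiE_def extensional_def)
    show "map f [0..<m] \<in> Dl S m"
      using f by (auto simp: E_def Dl_def distinct_map PiE_def)
    show "(\<Prod>i\<in>{0..<m}. c (map f [0..<m] ! i) i) = W f"
      by (simp add: W_def)
  next
    fix ns assume ns: "ns \<in> Dl S m"
    show "map (\<lambda>x. if x \<in> {0..<m} then ns!x else undefined) [0..<m] = ns"
      using ns by (auto simp: Dl_def intro!: nth_equalityI)
    show "(\<lambda>x. if x \<in> {0..<m} then ns!x else undefined) \<in> {f\<in>E. inj_on f {0..<m}}"
      using ns by (auto simp: Dl_def E_def inj_on_def nth_eq_iff_index_eq)
  qed
  finally show ?thesis .
qed

lemma A_op_trunc:
  fixes a :: "nat \<Rightarrow> nat \<Rightarrow> complex"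
  assumes p: "\<sigma> permutes {0..<size L}"
  shows "A_op \<sigma> L (\<lambda>n j. if n < N then a n j else 0)
       = (\<Prod>C\<in>perm_cycles \<sigma> (size L). \<Sum>n\<in>{1..<N}. \<Prod>i\<in>C. a n (sorted_list_of_multiset L ! i))"
  unfolding A_op_def Let_def
proof (rule prod.cong[OF refl])
  fix C assume "C \<in> perm_cycles \<sigma> (size L)"
  then obtain i where i: "i < size L" "C = orbit \<sigma> i" by (auto simp: perm_cycles_def)
  have finC: "finite C" and neC: "C \<noteq> {}" using orbit_facts(1,3)[OF p i(1)] i by auto
  define ks where "ks = sorted_list_of_multiset L"
  have "(\<Sum>n. \<Prod>i\<in>C. (if Suc n < N then a (Suc n) (ks ! i) else 0))
      = (\<Sum>n\<in>{0..<N-1}. \<Prod>i\<in>C. (if Suc n < N then a (Suc n) (ks ! i) else 0))"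
  proof (rule suminf_finite)
    fix n assume "n \<notin> {0..<N-1}"
    hence "\<not> Suc n < N" by auto
    thus "(\<Prod>i\<in>C. (if Suc n < N then a (Suc n) (ks ! i) else 0)) = 0"
      using finC neC by (auto intro: prod_zero)
  qed simp
  also have "\<dots> = (\<Sum>n\<in>{0..<N-1}. \<Prod>i\<in>C. a (Suc n) (ks ! i))"
    by (rule sum.cong[OF refl], rule prod.cong[OF refl]) auto
  also have "\<dots> = (\<Sum>n\<in>{1..<N}. \<Prod>i\<in>C. a n (ks ! i))"
  proof (cases N)
    case (Suc N') thus ?thesis using sum.shift_bounds_Suc_ivl[of "\<lambda>n. \<Prod>i\<in>C. a n (ks ! i)" 0 N'] by simp
  qed simp
  finally show "(\<Sum>n. \<Prod>i\<in>C. (if Suc n < N then a (Suc n) (ks ! i) else 0))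
      = (\<Sum>n\<in>{1..<N}. \<Prod>i\<in>C. a n (ks ! i))" .
qed

lemma length_sorted_mset [simp]: "length (sorted_list_of_multiset L) = size L"
  by (metis mset_sorted_list_of_multiset size_mset)

definition V :: "(nat \<Rightarrow> nat \<Rightarrow> complex) \<Rightarrow> nat set \<Rightarrow> nat list \<Rightarrow> complex" where
  "V a S ks = (\<Sum>ns\<in>Dl S (length ks). \<Prod>i\<in>{0..<length ks}. a (ns!i) (ks!i))"

lemma per_partition:
  fixes a :: "nat \<Rightarrow> nat \<Rightarrow> complex"
  shows "(\<Sum>\<sigma>\<in>{p. p permutes {0..<size L}}. of_int (sign \<sigma>) * A_op \<sigma> L (\<lambda>n j. if n < N then a n j else 0))
       = V a {1..<N} (sorted_list_of_multiset L)"
proof -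
  have "(\<Sum>\<sigma>\<in>{p. p permutes {0..<size L}}. of_int (sign \<sigma>) * A_op \<sigma> L (\<lambda>n j. if n < N then a n j else 0))
     = (\<Sum>\<sigma>\<in>{p. p permutes {0..<size L}}. of_int (sign \<sigma>) *
          (\<Prod>C\<in>perm_cycles \<sigma> (size L). \<Sum>n\<in>{1..<N}. \<Prod>i\<in>C. a n (sorted_list_of_multiset L ! i)))"
    by (rule sum.cong[OF refl]) (simp add: A_op_trunc)
  also have "\<dots> = V a {1..<N} (sorted_list_of_multiset L)"
    unfolding V_def by (subst sign_sum_inj) simp_all
  finally show ?thesis .
qed

lemma V_perm_inv:
  assumes eq: "mset ks' = mset ks"
  shows "V a S ks' = V a S ks"
proof -
  obtain p where p: "p permutes {..<length ks}" "permute_list p ks = ks'"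
    using mset_eq_permutation[OF eq] by blast
  define m where "m = length ks"
  have lm: "length ks' = m" using p(2) by (simp add: m_def flip: p(2))
  have pm: "p permutes {..<m}" using p(1) by (simp add: m_def)
  have ks': "ks' ! i = ks ! p i" if "i < m" for i
    using permute_list_nth[OF p(1)] that by (simp add: m_def flip: p(2))
  have pinv: "inv p permutes {..<m}" by (rule permutes_inv[OF pm])
  have "V a S ks' = (\<Sum>ns\<in>Dl S m. \<Prod>i\<in>{0..<m}. a (ns!i) (ks!(p i)))"
    unfolding V_def lm by (rule sum.cong[OF refl], rule prod.cong[OF refl]) (simp add: ks')
  also have "\<dots> = (\<Sum>ns\<in>Dl S m. \<Prod>i\<in>{0..<m}. a (permute_list p ns ! i) (ks!(p i)))"
  proof (rule sum.reindex_bij_witness[where i="permute_list p" and j="permute_list (inv p)"])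
    fix ns assume ns: "ns \<in> Dl S m"
    hence pn: "p permutes {..<length ns}" "inv p permutes {..<length ns}" using pm pinv by (auto simp: Dl_def)
    have e: "permute_list p (permute_list (inv p) ns) = ns"
      using permute_list_compose[OF pn(1), of "inv p"] permutes_inv_o(2)[OF pm] by simp
    show "permute_list p (permute_list (inv p) ns) = ns" by (rule e)
    show "permute_list (inv p) ns \<in> Dl S m" using ns pn by (auto simp: Dl_def)
    show "(\<Prod>i\<in>{0..<m}. a (permute_list p (permute_list (inv p) ns) ! i) (ks!(p i))) = (\<Prod>i\<in>{0..<m}. a (ns ! i) (ks!(p i)))"
      by (simp add: e)
  next
    fix ns assume ns: "ns \<in> Dl S m"
    hence pn: "p permutes {..<length ns}" "inv p permutes {..<length ns}" using pm pinv by (auto simp: Dl_def)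
    show "permute_list (inv p) (permute_list p ns) = ns"
      using permute_list_compose[OF pn(2), of p] permutes_inv_o(1)[OF pm] by simp
    show "permute_list p ns \<in> Dl S m" using ns pn by (auto simp: Dl_def)
  qed
  also have "\<dots> = (\<Sum>ns\<in>Dl S m. \<Prod>i\<in>{0..<m}. a (ns!i) (ks!i))"
  proof (rule sum.cong[OF refl])
    fix ns assume ns: "ns \<in> Dl S m"
    hence pn: "p permutes {..<length ns}" using pm by (auto simp: Dl_def)
    have "(\<Prod>i\<in>{0..<m}. a (permute_list p ns ! i) (ks!(p i))) = (\<Prod>i\<in>{..<m}. a (ns ! p i) (ks!(p i)))"
      using permute_list_nth[OF pn] ns by (auto simp: Dl_def atLeast0LessThan intro!: prod.cong)
    also have "\<dots> = (\<Prod>i\<in>{..<m}. a (ns ! i) (ks! i))"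
      using prod.reindex_bij_betw[OF permutes_imp_bij[OF pm], of "\<lambda>i. a (ns ! i) (ks! i)"] by simp
    finally show "(\<Prod>i\<in>{0..<m}. a (permute_list p ns ! i) (ks!(p i))) = (\<Prod>i\<in>{0..<m}. a (ns!i) (ks!i))"
      by (simp add: atLeast0LessThan)
  qed
  also have "\<dots> = V a S ks" by (simp add: V_def m_def)
  finally show ?thesis .
qed

definition Kl :: "nat \<Rightarrow> nat list set" where
  "Kl k = {ks. (\<forall>x\<in>set ks. 0 < x) \<and> sum_list ks = k}"

lemma length_le_sum_list_pos: "\<forall>x\<in>set ks. 0 < (x::nat) \<Longrightarrow> length ks \<le> sum_list ks"
  by (induction ks) auto

lemma finite_Kl: "finite (Kl k)"
proof (rule finite_subset[OF _ finite_lists_length_le[of "{0..k}" k]])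
  show "Kl k \<subseteq> {xs. set xs \<subseteq> {0..k} \<and> length xs \<le> k}"
    using length_le_sum_list_pos member_le_sum_list by (fastforce simp: Kl_def)
qed simp

lemma partition_sum:
  "(\<Sum>L\<in>partitions k. (1 / of_nat (C_stb L)) * V a S (sorted_list_of_multiset L))
   = (\<Sum>ks\<in>Kl k. (1 / fact (length ks)) * V a S ks)"
proof -
  have img: "mset ` Kl k = partitions k"
  proof (intro set_eqI iffI)
    fix L assume "L \<in> mset ` Kl k"
    thus "L \<in> partitions k" by (auto simp: Kl_def partitions_def sum_mset_sum_list)
  next
    fix L assume L: "L \<in> partitions k"
    have "sorted_list_of_multiset L \<in> Kl k"
      using L by (auto simp: Kl_def partitions_def simp flip: sum_mset_sum_list)
    thus "L \<in> mset ` Kl k" by (metis image_eqI mset_sorted_list_of_multiset)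
  qed
  have "(\<Sum>ks\<in>Kl k. (1 / fact (length ks)) * V a S ks)
      = (\<Sum>L\<in>mset ` Kl k. \<Sum>ks\<in>{ks\<in>Kl k. mset ks = L}. (1 / fact (length ks)) * V a S ks)"
    by (rule sum.image_gen[OF finite_Kl])
  also have "\<dots> = (\<Sum>L\<in>partitions k. (1 / of_nat (C_stb L)) * V a S (sorted_list_of_multiset L))"
    unfolding img
  proof (rule sum.cong[OF refl])
    fix L assume L: "L \<in> partitions k"
    have set_eq: "{ks\<in>Kl k. mset ks = L} = permutations_of_multiset L"
      using L by (auto simp: Kl_def partitions_def permutations_of_multiset_def sum_mset_sum_list
                      simp flip: set_mset_mset)
    have "(\<Sum>ks\<in>{ks\<in>Kl k. mset ks = L}. (1 / fact (length ks)) * V a S ks)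
        = (\<Sum>ks\<in>permutations_of_multiset L. (1 / fact (size L)) * V a S (sorted_list_of_multiset L))"
      unfolding set_eq
    proof (rule sum.cong[OF refl])
      fix ks assume "ks \<in> permutations_of_multiset L"
      hence ks: "mset ks = L" by (simp add: permutations_of_multiset_def)
      have "V a S ks = V a S (sorted_list_of_multiset L)"
        by (rule V_perm_inv) (simp add: ks)
      moreover have "length ks = size L" using ks by auto
      ultimately show "(1 / fact (length ks)) * V a S ks = (1 / fact (size L)) * V a S (sorted_list_of_multiset L)"
        by simp
    qed
    also have "\<dots> = of_nat (card (permutations_of_multiset L)) * (1 / fact (size L)) * V a S (sorted_list_of_multiset L)"
      by simp
    also have "of_nat (card (permutations_of_multiset L)) * (1 / fact (size L)) = (1 / of_nat (C_stb L) :: complex)"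
    proof -
      have e: "card (permutations_of_multiset L) * C_stb L = fact (size L)"
        unfolding C_stb_def by (rule card_permutations_of_multiset_aux)
      have nz: "C_stb L \<noteq> 0" unfolding C_stb_def by (simp add: prod_zero_iff)
      have "(of_nat (card (permutations_of_multiset L)) :: complex) * of_nat (C_stb L) = fact (size L)"
        using arg_cong[OF e, of "of_nat :: nat \<Rightarrow> complex"] by (simp add: of_nat_fact)
      thus ?thesis using nz by (simp add: field_simps)
    qed
    finally show "(\<Sum>ks\<in>{ks\<in>Kl k. mset ks = L}. (1 / fact (length ks)) * V a S ks)
        = (1 / of_nat (C_stb L)) * V a S (sorted_list_of_multiset L)" .
  qed
  finally show ?thesis ..
qed

lemma finite_len_sum: "finite {ks::nat list. length ks = m \<and> sum_list ks = k}"
proof (rule finite_subset[OF _ finite_lists_length_eq[of "{0..k}" m]])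
  show "{ks::nat list. length ks = m \<and> sum_list ks = k} \<subseteq> {xs. set xs \<subseteq> {0..k} \<and> length xs = m}"
    using member_le_sum_list by fastforce
qed simp

lemma fps_prod_nth:
  fixes G :: "nat \<Rightarrow> complex fps"
  shows "fps_nth (\<Prod>i\<in>{0..<m}. G i) k
       = (\<Sum>ks\<in>{ks. length ks = m \<and> sum_list ks = k}. \<Prod>i\<in>{0..<m}. G i $ (ks!i))"
proof (induction m arbitrary: G k)
  case 0
  have "{ks::nat list. length ks = 0 \<and> sum_list ks = k} = (if k = 0 then {[]} else {})" by auto
  thus ?case by simp
next
  case (Suc m)
  have "fps_nth (\<Prod>i\<in>{0..<Suc m}. G i) k = fps_nth (G 0 * (\<Prod>i\<in>{0..<m}. G (Suc i))) k"
    by (subst prod.atLeast0_lessThan_Suc_shift) (simp add: comp_def)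
  also have "\<dots> = (\<Sum>j=0..k. G 0 $ j * (\<Sum>ks\<in>{ks. length ks = m \<and> sum_list ks = k - j}. \<Prod>i\<in>{0..<m}. G (Suc i) $ (ks!i)))"
    by (simp add: fps_mult_nth Suc.IH)
  also have "\<dots> = (\<Sum>j\<in>{0..k}. \<Sum>ks\<in>{ks. length ks = m \<and> sum_list ks = k - j}. G 0 $ j * (\<Prod>i\<in>{0..<m}. G (Suc i) $ (ks!i)))"
    by (simp add: sum_distrib_left)
  also have "\<dots> = (\<Sum>(j,ks)\<in>Sigma {0..k} (\<lambda>j. {ks. length ks = m \<and> sum_list ks = k - j}). G 0 $ j * (\<Prod>i\<in>{0..<m}. G (Suc i) $ (ks!i)))"
    by (rule sum.Sigma) (auto simp: finite_len_sum)
  also have "\<dots> = (\<Sum>ks\<in>{ks. length ks = Suc m \<and> sum_list ks = k}. \<Prod>i\<in>{0..<Suc m}. G i $ (ks!i))"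
  proof (rule sum.reindex_bij_witness[where j="\<lambda>(j,ks). j # ks" and i="\<lambda>ks. (hd ks, tl ks)"])
    fix ks :: "nat list" assume ks: "ks \<in> {ks. length ks = Suc m \<and> sum_list ks = k}"
    then obtain j ks' where e: "ks = j # ks'" by (cases ks) auto
    show "(case (hd ks, tl ks) of (j, ks) \<Rightarrow> j # ks) = ks" using e by simp
    show "(hd ks, tl ks) \<in> Sigma {0..k} (\<lambda>j. {ks. length ks = m \<and> sum_list ks = k - j})"
      using ks e by auto
  next
    fix p assume p: "p \<in> Sigma {0..k} (\<lambda>j. {ks. length ks = m \<and> sum_list ks = k - j})"
    obtain j ks where e: "p = (j, ks)" by (cases p)
    show "(hd (case p of (j, ks) \<Rightarrow> j # ks), tl (case p of (j, ks) \<Rightarrow> j # ks)) = p"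
      using e by simp
    show "(case p of (j, ks) \<Rightarrow> j # ks) \<in> {ks. length ks = Suc m \<and> sum_list ks = k}"
      using p e by auto
    show "(\<Prod>i\<in>{0..<Suc m}. G i $ ((case p of (j, ks) \<Rightarrow> j # ks) ! i))
        = (case p of (j, ks) \<Rightarrow> G 0 $ j * (\<Prod>i\<in>{0..<m}. G (Suc i) $ (ks!i)))"
      using e by (subst prod.atLeast0_lessThan_Suc_shift) (simp add: comp_def)
  qed
  finally show ?case .
qed

definition Fs :: "(nat \<Rightarrow> nat \<Rightarrow> complex) \<Rightarrow> nat \<Rightarrow> complex fps" where
  "Fs a n = Abs_fps (\<lambda>j. if j = 0 then 0 else a n j)"

lemma prod_set_nth:
  fixes g :: "nat \<Rightarrow> 'b::comm_monoid_mult"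
  assumes "distinct ns"
  shows "(\<Prod>n\<in>set ns. g n) = (\<Prod>i\<in>{0..<length ns}. g (ns ! i))"
proof -
  have "set ns = (!) ns ` {0..<length ns}" by (auto simp: set_conv_nth)
  moreover have "inj_on ((!) ns) {0..<length ns}" using assms by (intro inj_on_nth) auto
  ultimately show ?thesis by (simp add: prod.reindex comp_def)
qed

lemma fps_side:
  fixes a :: "nat \<Rightarrow> nat \<Rightarrow> complex"
  assumes S: "finite S"
  shows "fps_nth (\<Prod>n\<in>S. 1 + Fs a n) k = (\<Sum>ks\<in>Kl k. (1 / fact (length ks)) * V a S ks)"
proof -
  define Dall where "Dall = {ns. distinct ns \<and> set ns \<subseteq> S}"
  have finD: "finite Dall" unfolding Dall_def by (rule finite_subset[OF _ finite_subset_distinct[OF S]]) auto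
  define h where "h = (\<lambda>ns. \<Sum>ks\<in>{ks. length ks = length ns \<and> sum_list ks = k}.
                           \<Prod>i\<in>{0..<length ns}. Fs a (ns!i) $ (ks!i))"
  have "(\<Prod>n\<in>S. 1 + Fs a n) = (\<Prod>n\<in>S. Fs a n + 1)" by (simp add: add.commute)
  also have "\<dots> = (\<Sum>T\<in>Pow S. \<Prod>n\<in>T. Fs a n)" by (simp add: prod_add[OF S])
  finally have "fps_nth (\<Prod>n\<in>S. 1 + Fs a n) k = (\<Sum>T\<in>Pow S. fps_nth (\<Prod>n\<in>T. Fs a n) k)"
    by (simp add: fps_sum_nth)
  also have "\<dots> = (\<Sum>T\<in>Pow S. (1 / fact (card T)) * (\<Sum>ns\<in>permutations_of_set T. h ns))"
  proof (rule sum.cong[OF refl])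
    fix T assume "T \<in> Pow S"
    hence finT: "finite T" using S finite_subset by auto
    have "(\<Sum>ns\<in>permutations_of_set T. h ns) = (\<Sum>ns\<in>permutations_of_set T. fps_nth (\<Prod>n\<in>T. Fs a n) k)"
    proof (rule sum.cong[OF refl])
      fix ns assume "ns \<in> permutations_of_set T"
      hence ns: "set ns = T" "distinct ns" by (auto dest: permutations_of_setD)
      show "h ns = fps_nth (\<Prod>n\<in>T. Fs a n) k"
        unfolding h_def using ns by (simp add: prod_set_nth[OF ns(2), symmetric] fps_prod_nth[symmetric])
    qed
    also have "\<dots> = fact (card T) * fps_nth (\<Prod>n\<in>T. Fs a n) k"
      using finT by simp
    finally show "fps_nth (\<Prod>n\<in>T. Fs a n) k = (1 / fact (card T)) * (\<Sum>ns\<in>permutations_of_set T. h ns)"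
      by simp
  qed
  also have "\<dots> = (\<Sum>ns\<in>Dall. (1 / fact (length ns)) * h ns)"
  proof -
    have img: "set ` Dall = Pow S"
    proof (intro set_eqI iffI)
      fix T assume "T \<in> Pow S"
      hence "finite T" "T \<subseteq> S" using S finite_subset by auto
      then obtain ns where "set ns = T" "distinct ns" using finite_distinct_list by blast
      thus "T \<in> set ` Dall" using \<open>T \<subseteq> S\<close> by (auto simp: Dall_def)
    qed (auto simp: Dall_def)
    have "(\<Sum>ns\<in>Dall. (1 / fact (length ns)) * h ns)
        = (\<Sum>T\<in>set ` Dall. \<Sum>ns\<in>{ns\<in>Dall. set ns = T}. (1 / fact (length ns)) * h ns)"
      by (rule sum.image_gen[OF finD])
    also have "\<dots> = (\<Sum>T\<in>Pow S. (1 / fact (card T)) * (\<Sum>ns\<in>permutations_of_set T. h ns))"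
      unfolding img
    proof (rule sum.cong[OF refl])
      fix T assume T: "T \<in> Pow S"
      have e: "{ns\<in>Dall. set ns = T} = permutations_of_set T"
        using T by (auto simp: Dall_def permutations_of_set_def)
      show "(\<Sum>ns\<in>{ns\<in>Dall. set ns = T}. (1 / fact (length ns)) * h ns)
          = (1 / fact (card T)) * (\<Sum>ns\<in>permutations_of_set T. h ns)"
        unfolding e sum_distrib_left
        by (rule sum.cong[OF refl]) (auto simp: permutations_of_set_def distinct_card)
    qed
    finally show ?thesis ..
  qed
  also have "\<dots> = (\<Sum>ns\<in>Dall. \<Sum>ks\<in>{ks. ks \<in> Kl k \<and> length ns = length ks}.
                     (1 / fact (length ns)) * (\<Prod>i\<in>{0..<length ns}. a (ns!i) (ks!i)))"
  proof (rule sum.cong[OF refl])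
    fix ns assume "ns \<in> Dall"
    have "h ns = (\<Sum>ks\<in>{ks. ks \<in> Kl k \<and> length ns = length ks}. \<Prod>i\<in>{0..<length ns}. a (ns!i) (ks!i))"
      unfolding h_def
    proof (rule sum.mono_neutral_cong_right)
      show "finite {ks. length ks = length ns \<and> sum_list ks = k}" by (rule finite_len_sum)
      show "{ks. ks \<in> Kl k \<and> length ns = length ks} \<subseteq> {ks. length ks = length ns \<and> sum_list ks = k}"
        by (auto simp: Kl_def)
    next
      show "\<forall>ks\<in>{ks. length ks = length ns \<and> sum_list ks = k} - {ks. ks \<in> Kl k \<and> length ns = length ks}.
              (\<Prod>i\<in>{0..<length ns}. Fs a (ns!i) $ (ks!i)) = 0"
      proof
      fix ks assume ks: "ks \<in> {ks. length ks = length ns \<and> sum_list ks = k} - {ks. ks \<in> Kl k \<and> length ns = length ks}"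
      then obtain x where "x \<in> set ks" "x = 0" by (auto simp: Kl_def)
      then obtain i where i: "i < length ks" "ks ! i = 0" by (auto simp: in_set_conv_nth)
      show "(\<Prod>i\<in>{0..<length ns}. Fs a (ns!i) $ (ks!i)) = 0"
        using ks i by (intro prod_zero) (auto simp: Fs_def intro!: bexI[of _ i])
      qed
    next
      fix ks assume ks: "ks \<in> {ks. ks \<in> Kl k \<and> length ns = length ks}"
      show "(\<Prod>i\<in>{0..<length ns}. Fs a (ns!i) $ (ks!i)) = (\<Prod>i\<in>{0..<length ns}. a (ns!i) (ks!i))"
      proof (rule prod.cong[OF refl])
        fix i assume "i \<in> {0..<length ns}"
        hence "ks ! i \<in> set ks" using ks by auto
        hence "ks ! i > 0" using ks by (auto simp: Kl_def)
        thus "Fs a (ns!i) $ (ks!i) = a (ns!i) (ks!i)" by (simp add: Fs_def)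
      qed
    qed
    thus "(1 / fact (length ns)) * h ns = (\<Sum>ks\<in>{ks. ks \<in> Kl k \<and> length ns = length ks}.
                     (1 / fact (length ns)) * (\<Prod>i\<in>{0..<length ns}. a (ns!i) (ks!i)))"
      by (simp add: sum_distrib_left)
  qed
  also have "\<dots> = (\<Sum>ks\<in>Kl k. \<Sum>ns\<in>{ns. ns \<in> Dall \<and> length ns = length ks}.
                     (1 / fact (length ns)) * (\<Prod>i\<in>{0..<length ns}. a (ns!i) (ks!i)))"
    by (rule sum.swap_restrict[OF finD finite_Kl])
  also have "\<dots> = (\<Sum>ks\<in>Kl k. (1 / fact (length ks)) * V a S ks)"
  proof (rule sum.cong[OF refl])
    fix ks :: "nat list"
    have e: "{ns. ns \<in> Dall \<and> length ns = length ks} = Dl S (length ks)"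
      by (auto simp: Dall_def Dl_def)
    show "(\<Sum>ns\<in>{ns. ns \<in> Dall \<and> length ns = length ks}.
                     (1 / fact (length ns)) * (\<Prod>i\<in>{0..<length ns}. a (ns!i) (ks!i)))
        = (1 / fact (length ks)) * V a S ks"
      unfolding e V_def sum_distrib_left by (rule sum.cong[OF refl]) (simp add: Dl_def)
  qed
  finally show ?thesis .
qed

lemma fps_of_series:
  fixes c :: "nat \<Rightarrow> complex" and r :: real
  assumes r: "r > 0" and sm: "\<forall>z\<in>ball 0 r. summable (\<lambda>j. c (Suc j) * z ^ Suc j)"
  defines "H \<equiv> Abs_fps (\<lambda>j. if j = 0 then 1 else c j)"
  shows "fps_conv_radius H \<ge> ereal r"
    and "\<And>z. z \<in> ball 0 r \<Longrightarrow> eval_fps H z = 1 + (\<Sum>j. c (Suc j) * z ^ Suc j)"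
    and "(\<lambda>z. 1 + (\<Sum>j. c (Suc j) * z ^ Suc j)) has_fps_expansion H"
proof -
  have sH: "summable (\<lambda>j. fps_nth H j * z ^ j)" if z: "z \<in> ball 0 r" for z
  proof -
    have "summable (\<lambda>j. fps_nth H (Suc j) * z ^ Suc j)"
      using sm z by (simp add: H_def)
    thus ?thesis by (subst (asm) summable_Suc_iff)
  qed
  show ev: "eval_fps H z = 1 + (\<Sum>j. c (Suc j) * z ^ Suc j)" if z: "z \<in> ball 0 r" for z
  proof -
    have "(\<Sum>j. fps_nth H (Suc j) * z ^ Suc j) = eval_fps H z - fps_nth H 0 * z ^ 0"
      unfolding eval_fps_def by (rule suminf_split_head[OF sH[OF z]])
    thus ?thesis by (simp add: H_def)
  qed
  show cr: "fps_conv_radius H \<ge> ereal r"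
    unfolding fps_conv_radius_def
  proof (rule conv_radius_geI_ex')
    fix \<rho> :: real assume "0 < \<rho>" "ereal \<rho> < ereal r"
    hence "complex_of_real \<rho> \<in> ball 0 r" by simp
    thus "summable (\<lambda>n. fps_nth H n * of_real \<rho> ^ n)" by (rule sH)
  qed
  show "(\<lambda>z. 1 + (\<Sum>j. c (Suc j) * z ^ Suc j)) has_fps_expansion H"
    unfolding has_fps_expansion_def
  proof
    show "0 < fps_conv_radius H" using cr r by (metis ereal_less(2) order_less_le_trans)
    have "eventually (\<lambda>z. z \<in> ball 0 r) (nhds (0::complex))"
      by (rule eventually_nhds_in_open) (use r in auto)
    thus "eventually (\<lambda>z. eval_fps H z = 1 + (\<Sum>j. c (Suc j) * z ^ Suc j)) (nhds 0)"
      by eventually_elim (rule ev)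
  qed
qed

theorem mainTheorem5:
  fixes a :: "nat \<Rightarrow> nat \<Rightarrow> complex" and X :: "nat \<Rightarrow> complex" and r :: real and k :: nat
  assumes r_pos: "r > 0"
    and a_conv: "\<forall>n\<ge>1. \<forall>z\<in>ball 0 r. summable (\<lambda>j. a n (Suc j) * z ^ Suc j)"
    and X_conv: "\<forall>z\<in>ball 0 r. summable (\<lambda>j. X (Suc j) * z ^ Suc j)"
    and unif: "uniform_limit (ball 0 r)
                 (\<lambda>N z. \<Prod>n\<in>{1..N}. 1 + (\<Sum>j. a n (Suc j) * z ^ Suc j))
                 (\<lambda>z. 1 + (\<Sum>j. X (Suc j) * z ^ Suc j)) sequentially"
    and k_pos: "k \<ge> 1"
  shows "(\<lambda>N. \<Sum>L\<in>partitions k. (1 / of_nat (C_stb L)) *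
            (\<Sum>\<sigma>\<in>{p. p permutes {0..<size L}}.
               of_int (sign \<sigma>) * A_op \<sigma> L (\<lambda>n j. if n < N then a n j else 0)))
         \<longlonglongrightarrow> X k"
proof -
  define f where "f = (\<lambda>n z. 1 + (\<Sum>j. a n (Suc j) * z ^ Suc j))"
  define P where "P = (\<lambda>M z. \<Prod>n\<in>{1..M}. f n z)"
  define G where "G = (\<lambda>z. 1 + (\<Sum>j. X (Suc j) * z ^ Suc j))"
  define H where "H = (\<lambda>n. Abs_fps (\<lambda>j. if j = 0 then 1 else a n j))"
  define HX where "HX = Abs_fps (\<lambda>j. if j = 0 then 1 else X j)"
  define tm where "tm = (\<lambda>N. \<Sum>L\<in>partitions k. (1 / of_nat (C_stb L)) *
            (\<Sum>\<sigma>\<in>{p. p permutes {0..<size L}}.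
               of_int (sign \<sigma>) * A_op \<sigma> L (\<lambda>n j. if n < N then a n j else 0)))"
  have Hn: "fps_conv_radius (H n) \<ge> ereal r" "\<And>z. z \<in> ball 0 r \<Longrightarrow> eval_fps (H n) z = f n z"
           "f n has_fps_expansion H n" if "n \<in> {1..M}" for n M
  proof -
    have "\<forall>z\<in>ball 0 r. summable (\<lambda>j. a n (Suc j) * z ^ Suc j)" using a_conv that by auto
    note * = fps_of_series[OF r_pos this]
    show "fps_conv_radius (H n) \<ge> ereal r" using *(1) by (simp add: H_def)
    show "\<And>z. z \<in> ball 0 r \<Longrightarrow> eval_fps (H n) z = f n z" using *(2) by (simp add: H_def f_def)
    show "f n has_fps_expansion H n" using *(3) by (simp add: H_def f_def[abs_def])
  qed
  have HXf: "G has_fps_expansion HX" unfolding G_def HX_def by (rule fps_of_series(3)[OF r_pos X_conv])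
  have Xk: "X k = (deriv ^^ k) G 0 / fact k"
    using fps_nth_fps_expansion[OF HXf, of k] k_pos by (simp add: HX_def)
  have PM: "P M has_fps_expansion (\<Prod>n\<in>{1..M}. H n)" for M
    unfolding P_def by (rule has_fps_expansion_prod) (rule Hn(3))
  have holP: "P M holomorphic_on ball 0 r" for M
  proof -
    have "(\<lambda>z. \<Prod>n\<in>{1..M}. eval_fps (H n) z) holomorphic_on ball 0 r"
    proof (rule holomorphic_on_prod)
      fix n assume n: "n \<in> {1..M}"
      show "eval_fps (H n) holomorphic_on ball 0 r"
      proof (rule holomorphic_on_eval_fps)
        show "ball 0 r \<subseteq> eball 0 (fps_conv_radius (H n))"
        proof
          fix x assume "x \<in> ball 0 r"
          hence "ereal (dist 0 x) < ereal r" by simp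
          thus "x \<in> eball 0 (fps_conv_radius (H n))"
            unfolding eball_def mem_Collect_eq by (rule order_less_le_trans[OF _ Hn(1)[OF n]])
        qed
      qed
    qed
    thus ?thesis unfolding P_def
      by (rule holomorphic_transform) (rule prod.cong[OF refl], rule Hn(2), auto)
  qed
  have termP: "tm (Suc M) = (deriv ^^ k) (P M) 0 / fact k" for M
  proof -
    have "tm (Suc M) = (\<Sum>L\<in>partitions k. (1 / of_nat (C_stb L)) * V a {1..<Suc M} (sorted_list_of_multiset L))"
      unfolding tm_def by (simp add: per_partition)
    also have "\<dots> = (\<Sum>ks\<in>Kl k. (1 / fact (length ks)) * V a {1..<Suc M} ks)"
      by (rule partition_sum)
    also have "\<dots> = fps_nth (\<Prod>n\<in>{1..<Suc M}. 1 + Fs a n) k"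
      by (rule fps_side[symmetric]) simp
    also have "(\<Prod>n\<in>{1..<Suc M}. 1 + Fs a n) = (\<Prod>n\<in>{1..M}. H n)"
    proof -
      have "1 + Fs a n = H n" for n by (rule fps_ext) (simp add: Fs_def H_def)
      moreover have "{1..<Suc M} = {1..M}" by auto
      ultimately show ?thesis by simp
    qed
    also have "fps_nth (\<Prod>n\<in>{1..M}. H n) k = (deriv ^^ k) (P M) 0 / fact k"
      by (rule fps_nth_fps_expansion[OF PM])
    finally show ?thesis .
  qed
  have lim: "(\<lambda>M. (deriv ^^ k) (P M) 0) \<longlonglongrightarrow> (deriv ^^ k) G 0"
  proof (rule higher_deriv_complex_uniform_limit)
    show "uniform_limit (ball 0 r) P G sequentially"
      using unif unfolding P_def G_def f_def .
  qed (use holP r_pos in auto)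
  have "(\<lambda>M. tm (Suc M)) \<longlonglongrightarrow> X k"
    unfolding termP Xk by (intro tendsto_divide lim tendsto_const) simp
  hence "tm \<longlonglongrightarrow> X k" by (rule filterlim_sequentially_Suc[THEN iffD1])
  thus ?thesis unfolding tm_def .
qed

end
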